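(* Let $n\geqslant 1$ and let $m_1,\ldots,m_n$ be nonnegative integers. Then, as rational functions of $x$, $$\|x_j^{m_i}\|^*_{1\leqslant i,j\leqslant n}(x-n+1,x-n+2,\ldots,x)=\prod_{1\leqslant i<j\leqslant n}(m_j-m_i)\times\prod_{i=1}^n\frac{(x)_{m_i}}{(x)_{i-1}},$$ where the left side means the polynomial $Q^*$ for $Q(x_1,\ldots,x_n)=\|x_j^{m_i}\|_{1\leqslant i,j\leqslant n}$ evaluated at $x_i=x-n+i$ for $i=1,\ldots,n$.
   Context: $(x)_0=1$ and $(x)_r=x(x-1)\cdots(x-r+1)$ for positive integers $r$. For a polynomial $Q=\sum_{j_1,\ldots,j_n} c_{j_1,\ldots,j_n}x_1^{j_1}\cdots x_n^{j_n}\in\mathbb{C}[x_1,\ldots,x_n]$, $Q^*$ denotes $\sum_{j_1,\ldots,j_n} c_{j_1,\ldots,j_n}(x_1)_{j_1}\cdots(x_n)_{j_n}$. $\|b_{ij}\|_{1\leqslant i,j\leqslant n}$ denotes the determinant of the matrix $(b_{ij})$. *)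

theory Defs
  imports "HOL-Library.Poly_Mapping" "HOL-Combinatorics.Permutations" Complex_Main
begin

type_synonym mpoly = "(nat \<Rightarrow>\<^sub>0 nat) \<Rightarrow>\<^sub>0 complex"

definition mvar :: "nat \<Rightarrow> mpoly" where
  "mvar j = Poly_Mapping.single (Poly_Mapping.single j 1) 1"

definition ffact_c :: "complex \<Rightarrow> nat \<Rightarrow> complex" where
  "ffact_c x r = (\<Prod>k<r. x - of_nat k)"

definition detn :: "nat \<Rightarrow> (nat \<Rightarrow> nat \<Rightarrow> 'a::comm_ring_1) \<Rightarrow> 'a" where
  "detn n b = (\<Sum>p | p permutes {1..n}. of_int (sign p) * (\<Prod>i=1..n. b i (p i)))"

text \<open>Q^* evaluated at the point v: each monomial x_1^{j_1}...x_k^{j_k} is replaced by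
  (x_1)_{j_1}...(x_k)_{j_k}, then evaluated at x_i = v i.\<close>
definition star_eval :: "mpoly \<Rightarrow> (nat \<Rightarrow> complex) \<Rightarrow> complex" where
  "star_eval Q v = (\<Sum>e\<in>Poly_Mapping.keys Q. Poly_Mapping.lookup Q e * (\<Prod>j\<in>Poly_Mapping.keys (e :: nat \<Rightarrow>\<^sub>0 nat). ffact_c (v j) (Poly_Mapping.lookup e j)))"

end

theory Submission
  imports Defs "Jordan_Normal_Form.Determinant"
begin

lemma ffact_Suc: "ffact_c y (Suc k) = ffact_c y k * (y - of_nat k)"
  by (simp add: ffact_c_def)

lemma ffact_0[simp]: "ffact_c y 0 = 1"
  by (simp add: ffact_c_def)

lemma perm_lt: fixes n :: nat assumes "p permutes {0..<n}" "i < n" shows "p i < n"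
proof -
  have "p i \<in> {0..<n}" using permutes_in_image[OF assms(1), of i] assms(2) by simp
  thus ?thesis by simp
qed

lemma det_scale_rows:
  fixes a :: "nat \<Rightarrow> nat \<Rightarrow> 'a::comm_ring_1"
  shows "det (mat n n (\<lambda>(i,j). c i * a i j)) = (\<Prod>i<n. c i) * det (mat n n (\<lambda>(i,j). a i j))"
proof -
  have "det (mat n n (\<lambda>(i,j). c i * a i j)) =
    (\<Sum>p\<in>{p. p permutes {0..<n}}. signof p * (\<Prod>i=0..<n. c i * a i (p i)))"
    by (subst det_def'[of _ n]) (auto intro!: sum.cong prod.cong intro: perm_lt)
  also have "\<dots> = (\<Sum>p\<in>{p. p permutes {0..<n}}. (\<Prod>i<n. c i) * (signof p * (\<Prod>i=0..<n. a i (p i))))"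
    by (auto simp: prod.distrib lessThan_atLeast0 intro!: sum.cong)
  also have "\<dots> = (\<Prod>i<n. c i) * det (mat n n (\<lambda>(i,j). a i j))"
    by (subst det_def'[of _ n]) (auto simp: sum_distrib_left intro!: sum.cong prod.cong intro: perm_lt)
  finally show ?thesis .
qed

lemma ffvand:
  fixes w :: "nat \<Rightarrow> complex"
  shows "det (mat n n (\<lambda>(i,j). ffact_c (w i) (n - Suc j))) = (\<Prod>i<n. \<Prod>j\<in>{i<..<n}. (w i - w j))"
proof (induction n)
  case 0
  then show ?case by simp
next
  case (Suc n)
  define N where "N = Suc n"
  define A where "A = mat N N (\<lambda>(i,j). ffact_c (w i) (n - j))"
  define E :: "complex mat" where "E = mat N N (\<lambda>(k,j). if k = j then 1 else if k = Suc j then -(w n - of_nat (n - Suc j)) else 0)"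
  define B where "B = mat N N (\<lambda>(i,j). if j = n then 1 else (w i - w n) * ffact_c (w i) (n - Suc j))"
  have AC: "A \<in> carrier_mat N N" and EC: "E \<in> carrier_mat N N" and BC: "B \<in> carrier_mat N N"
    by (auto simp: A_def E_def B_def)
  have detE: "det E = 1"
  proof -
    have "det E = prod_list (diag_mat E)"
      by (rule det_lower_triangular[OF _ EC]) (auto simp: E_def)
    also have "diag_mat E = replicate N 1"
      by (auto simp: diag_mat_def E_def intro!: nth_equalityI)
    finally show ?thesis by simp
  qed
  have AEB: "A * E = B"
  proof (rule eq_matI)
    fix i j assume i: "i < dim_row B" and j: "j < dim_col B"
    hence i': "i < N" and j': "j < N" by (auto simp: B_def)
    have "(A * E) $$ (i,j) = (\<Sum>k\<in>{0..<N}. A $$ (i,k) * E $$ (k,j))"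
      using i' j' AC EC by (simp add: scalar_prod_def)
    also have "\<dots> = (\<Sum>k\<in>{0..<N}. (if k = j then A $$ (i,k) else 0) +
        (if k = Suc j then A $$ (i,k) * (-(w n - of_nat (n - Suc j))) else 0))"
      by (rule sum.cong) (use j' in \<open>auto simp: E_def\<close>)
    also have "\<dots> = A $$ (i,j) + (if Suc j < N then A $$ (i, Suc j) * (-(w n - of_nat (n - Suc j))) else 0)"
      using j' by (simp add: sum.distrib)
    also have "\<dots> = B $$ (i,j)"
    proof (cases "j = n")
      case True
      then show ?thesis using i' j' by (simp add: A_def B_def N_def)
    next
      case False
      hence jn: "j < n" using j' N_def by simp
      have nj: "n - j = Suc (n - Suc j)" using jn by simp
      show ?thesis using i' j' jn
        by (simp add: A_def B_def N_def nj ffact_Suc algebra_simps)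
    qed
    finally show "(A * E) $$ (i,j) = B $$ (i,j)" .
  qed (auto simp: A_def E_def B_def)
  have "det A = det B"
    using det_mult[OF AC EC] detE AEB by simp
  also have "det B = (\<Sum>j<N. B $$ (n,j) * cofactor B n j)"
    by (rule laplace_expansion_row[OF BC]) (simp add: N_def)
  also have "\<dots> = cofactor B n n"
    by (simp add: N_def B_def)
  also have "\<dots> = det (mat_delete B n n)"
    by (simp add: cofactor_def)
  also have "mat_delete B n n = mat n n (\<lambda>(i,j). (w i - w n) * ffact_c (w i) (n - Suc j))"
    by (rule eq_matI) (auto simp: mat_delete_def B_def N_def)
  also have "det \<dots> = (\<Prod>i<n. (w i - w n)) * det (mat n n (\<lambda>(i,j). ffact_c (w i) (n - Suc j)))"
    by (rule det_scale_rows)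
  also have "\<dots> = (\<Prod>i<n. (w i - w n)) * (\<Prod>i<n. \<Prod>j\<in>{i<..<n}. (w i - w j))"
    by (simp add: Suc.IH)
  also have "\<dots> = (\<Prod>i<N. \<Prod>j\<in>{i<..<N}. (w i - w j))"
  proof -
    have "(\<Prod>i<N. \<Prod>j\<in>{i<..<N}. (w i - w j)) = (\<Prod>i<n. \<Prod>j\<in>{i<..<N}. (w i - w j))"
    proof -
      have "{n<..<Suc n} = {}" by auto
      thus ?thesis by (simp add: N_def)
    qed
    also have "\<dots> = (\<Prod>i<n. (w i - w n) * (\<Prod>j\<in>{i<..<n}. (w i - w j)))"
    proof (rule prod.cong)
      fix i assume "i \<in> {..<n}"
      hence "{i<..<N} = insert n {i<..<n}" by (auto simp: N_def)
      thus "(\<Prod>j\<in>{i<..<N}. (w i - w j)) = (w i - w n) * (\<Prod>j\<in>{i<..<n}. (w i - w j))"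
        by simp
    qed simp
    finally show ?thesis by (simp add: prod.distrib)
  qed
  finally show ?case by (simp add: A_def N_def)
qed

lemma bij_Suc: "bij_betw Suc {0..<n} {1..n}"
  by (rule bij_betw_byWitness[where f'="\<lambda>i. i - 1"]) (auto simp: image_subset_iff)

lemma bij_pred: "bij_betw (\<lambda>i. i - 1) {1..n::nat} {0..<n}"
  by (rule bij_betw_byWitness[where f'=Suc]) (auto simp: image_subset_iff)

lemma detn_det: "detn n b = det (mat n n (\<lambda>(i,j). b (Suc i) (Suc j)))"
proof -
  have "det (mat n n (\<lambda>(i,j). b (Suc i) (Suc j))) =
     (\<Sum>q\<in>{q. q permutes {0..<n}}. signof q * (\<Prod>i=0..<n. b (Suc i) (Suc (q i))))"
    by (subst det_def'[of _ n]) (auto intro!: sum.cong prod.cong intro: perm_lt)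
  also have "\<dots> = (\<Sum>p\<in>{p. p permutes {1..n}}. of_int (sign p) * (\<Prod>i=1..n. b i (p i)))"
  proof (rule sum.reindex_bij_witness[of _ "map_permutation {1..n} (\<lambda>i. i - 1)" "map_permutation {0..<n} Suc"])
    fix q assume q: "q \<in> {q. q permutes {0..<n}}"
    hence qp: "q permutes {0..<n}" by simp
    show "map_permutation {1..n} (\<lambda>i. i - 1) (map_permutation {0..<n} Suc q) = q"
      by (rule map_permutation_compose_inv[OF bij_Suc qp]) simp
    show "map_permutation {0..<n} Suc q \<in> {p. p permutes {1..n}}"
      using map_permutation_permutes[OF bij_Suc qp] by simp
    define p where "p = map_permutation {0..<n} Suc q"
    have sg: "sign p = sign q"
      unfolding p_def by (rule sign_map_permutation[OF _ qp]) (auto simp: inj_on_def)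
    have pS: "p (Suc k) = Suc (q k)" if "k < n" for k
      unfolding p_def by (rule map_permutation_apply) (use that in auto)
    have "(\<Prod>i=1..n. b i (p i)) = (\<Prod>k\<in>{0..<n}. b (Suc k) (p (Suc k)))"
      using prod.reindex_bij_betw[OF bij_Suc, of "\<lambda>i. b i (p i)"] by simp
    also have "\<dots> = (\<Prod>k=0..<n. b (Suc k) (Suc (q k)))"
      by (rule prod.cong) (auto simp: pS)
    finally show "of_int (sign (map_permutation {0..<n} Suc q)) *
        (\<Prod>i=1..n. b i (map_permutation {0..<n} Suc q i)) =
        signof q * (\<Prod>i=0..<n. b (Suc i) (Suc (q i)))"
      using sg unfolding p_def by simp
  next
    fix p assume "p \<in> {p. p permutes {1..n}}"
    hence pp: "p permutes {1..n}" by simp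
    show "map_permutation {0..<n} Suc (map_permutation {1..n} (\<lambda>i. i - 1) p) = p"
      by (rule map_permutation_compose_inv[OF bij_pred pp]) simp
    show "map_permutation {1..n} (\<lambda>i. i - 1) p \<in> {q. q permutes {0..<n}}"
      using map_permutation_permutes[OF bij_pred pp] by simp
  qed
  finally show ?thesis by (simp add: detn_def)
qed

lemma ffact_add: "ffact_c y (a + b) = ffact_c y a * ffact_c (y - of_nat a) b"
  by (induction b) (simp_all add: ffact_Suc algebra_simps)

definition Mon :: "(nat \<Rightarrow>\<^sub>0 nat) \<Rightarrow> (nat \<Rightarrow> complex) \<Rightarrow> complex" where
  "Mon e v = (\<Prod>j\<in>Poly_Mapping.keys e. ffact_c (v j) (Poly_Mapping.lookup e j))"

lemma star_eval_sum_single: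
  fixes E :: "'b \<Rightarrow> (nat \<Rightarrow>\<^sub>0 nat)" and c :: "'b \<Rightarrow> complex"
  assumes P: "finite P"
  shows "star_eval (\<Sum>p\<in>P. Poly_Mapping.single (E p) (c p)) v = (\<Sum>p\<in>P. c p * Mon (E p) v)"
proof -
  define Q where "Q = (\<Sum>p\<in>P. Poly_Mapping.single (E p) (c p))"
  have lk: "Poly_Mapping.lookup Q e = (\<Sum>p\<in>P. if E p = e then c p else 0)" for e
    unfolding Q_def by (simp add: lookup_sum lookup_single when_def)
  have ks: "Poly_Mapping.keys Q \<subseteq> E ` P"
  proof
    fix e assume "e \<in> Poly_Mapping.keys Q"
    hence "Poly_Mapping.lookup Q e \<noteq> 0" by (simp add: in_keys_iff)
    show "e \<in> E ` P"
    proof (rule ccontr)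
      assume "e \<notin> E ` P"
      hence "\<And>p. p \<in> P \<Longrightarrow> E p \<noteq> e" by blast
      hence "Poly_Mapping.lookup Q e = 0" unfolding lk by simp
      with \<open>Poly_Mapping.lookup Q e \<noteq> 0\<close> show False by simp
    qed
  qed
  have "star_eval Q v = (\<Sum>e\<in>Poly_Mapping.keys Q. Poly_Mapping.lookup Q e * Mon e v)"
    by (simp add: star_eval_def Mon_def)
  also have "\<dots> = (\<Sum>e\<in>E ` P. Poly_Mapping.lookup Q e * Mon e v)"
    by (rule sum.mono_neutral_left) (use P ks in \<open>auto simp: in_keys_iff\<close>)
  also have "\<dots> = (\<Sum>e\<in>E ` P. \<Sum>p\<in>P. (if E p = e then c p * Mon e v else 0))"
    unfolding lk sum_distrib_right by (intro sum.cong refl) simp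
  also have "\<dots> = (\<Sum>p\<in>P. \<Sum>e\<in>E ` P. (if E p = e then c p * Mon e v else 0))"
    by (rule sum.swap)
  also have "\<dots> = (\<Sum>p\<in>P. c p * Mon (E p) v)"
    using P by (simp add: sum.delta)
  finally show ?thesis unfolding Q_def .
qed

lemma mvar_pow: "mvar j ^ k = Poly_Mapping.single (Poly_Mapping.single j k) 1"
proof (induction k)
  case 0
  then show ?case by simp
next
  case (Suc k)
  have "mvar j ^ Suc k = mvar j * mvar j ^ k" by simp
  also have "\<dots> = Poly_Mapping.single (Poly_Mapping.single j 1 + Poly_Mapping.single j k) 1"
    by (simp only: Suc.IH) (simp add: mvar_def mult_single)
  also have "Poly_Mapping.single j 1 + Poly_Mapping.single j k = Poly_Mapping.single j (Suc k)"
    by (simp add: single_add[symmetric])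
  finally show ?case .
qed

lemma prod_single:
  assumes "finite I"
  shows "(\<Prod>i\<in>I. Poly_Mapping.single (a i) (1::complex)) = Poly_Mapping.single (\<Sum>i\<in>I. a i) 1"
  using assms by (induction I rule: finite_induct) (simp_all add: mult_single)

lemma detn_expand:
  "detn n (\<lambda>i j. mvar j ^ m i) =
    (\<Sum>p\<in>{p. p permutes {1..n}}. Poly_Mapping.single (\<Sum>i=1..n. Poly_Mapping.single (p i) (m i)) (of_int (sign p)))"
  unfolding detn_def
proof (rule sum.cong)
  fix p :: "nat \<Rightarrow> nat"
  have "of_int (sign p) * (\<Prod>i=1..n. mvar (p i) ^ m i) =
     Poly_Mapping.single 0 (of_int (sign p)) * Poly_Mapping.single (\<Sum>i=1..n. Poly_Mapping.single (p i) (m i)) (1::complex)"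
    by (simp add: mvar_pow prod_single)
  also have "\<dots> = Poly_Mapping.single (\<Sum>i=1..n. Poly_Mapping.single (p i) (m i)) (of_int (sign p))"
    by (simp only: mult_single) simp
  finally show "of_int (sign p) * (\<Prod>i=1..n. mvar (p i) ^ m i) =
     Poly_Mapping.single (\<Sum>i=1..n. Poly_Mapping.single (p i) (m i)) (of_int (sign p))" .
qed simp

lemma Mon_E:
  assumes p: "p permutes {1..n}"
  shows "Mon (\<Sum>i=1..n. Poly_Mapping.single (p i) (m i)) v = (\<Prod>i=1..n. ffact_c (v (p i)) (m i))"
proof -
  define e where "e = (\<Sum>i=1..n. Poly_Mapping.single (p i) (m i))"
  have lk: "Poly_Mapping.lookup e j = (\<Sum>i=1..n. if p i = j then m i else 0)" for j
    unfolding e_def by (simp add: lookup_sum lookup_single when_def)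
  have ks: "Poly_Mapping.keys e \<subseteq> {1..n}"
  proof
    fix j assume j: "j \<in> Poly_Mapping.keys e"
    show "j \<in> {1..n}"
    proof (rule ccontr)
      assume nj: "j \<notin> {1..n}"
      have "\<And>i. i \<in> {1..n} \<Longrightarrow> p i \<noteq> j" using permutes_in_image[OF p] nj by blast
      hence "Poly_Mapping.lookup e j = 0" unfolding lk by simp
      thus False using j by (simp add: in_keys_iff)
    qed
  qed
  have "Mon e v = (\<Prod>j\<in>{1..n}. ffact_c (v j) (Poly_Mapping.lookup e j))"
    unfolding Mon_def by (rule prod.mono_neutral_left) (use ks in \<open>auto simp: in_keys_iff\<close>)
  also have "\<dots> = (\<Prod>i\<in>{1..n}. ffact_c (v (p i)) (Poly_Mapping.lookup e (p i)))"
    by (rule prod.reindex_bij_betw[OF permutes_imp_bij[OF p], symmetric])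
  also have "\<dots> = (\<Prod>i\<in>{1..n}. ffact_c (v (p i)) (m i))"
  proof (rule prod.cong)
    fix i assume i: "i \<in> {1..n}"
    have "Poly_Mapping.lookup e (p i) = (\<Sum>k=1..n. if k = i then m k else 0)"
      unfolding lk using permutes_inj[OF p] by (intro sum.cong) (auto dest: injD)
    also have "\<dots> = m i" using i by simp
    finally show "ffact_c (v (p i)) (Poly_Mapping.lookup e (p i)) = ffact_c (v (p i)) (m i)" by simp
  qed simp
  finally show ?thesis unfolding e_def .
qed

lemma bij_Suc2: "bij_betw Suc {i<..<n} {Suc i<..n}"
  by (rule bij_betw_byWitness[where f'="\<lambda>i. i - 1"]) (auto simp: image_subset_iff)

theorem corollary2p1:
  fixes n :: nat and m :: "nat \<Rightarrow> nat" and x :: complex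
  assumes "n \<ge> 1"
    and "(\<Prod>i=1..n. ffact_c x (i - 1)) \<noteq> 0"
  shows "star_eval (detn n (\<lambda>i j. mvar j ^ m i)) (\<lambda>i. x - of_nat n + of_nat i)
       = of_int (\<Prod>i=1..n. \<Prod>j\<in>{i<..n}. (int (m j) - int (m i)))
         * (\<Prod>i=1..n. ffact_c x (m i) / ffact_c x (i - 1))"
proof -
  let ?v = "\<lambda>i. x - of_nat n + of_nat i"
  define E where "E = (\<lambda>p::nat\<Rightarrow>nat. \<Sum>i=1..n. Poly_Mapping.single (p i) (m i))"
  define P where "P = {p. p permutes {1..n}}"
  define F where "F = (\<Prod>i=1..n. ffact_c x (m i))"
  define C where "C = (\<Prod>i=1..n. ffact_c x (i - 1))"
  define G where "G = (\<lambda>p. \<Prod>i=1..n. ffact_c (x - of_nat (m i)) (n - p i))"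
  have C0: "C \<noteq> 0" using assms(2) C_def by simp
  have "star_eval (detn n (\<lambda>i j. mvar j ^ m i)) ?v = (\<Sum>p\<in>P. of_int (sign p) * Mon (E p) ?v)"
    unfolding detn_expand P_def E_def by (rule star_eval_sum_single) (simp add: finite_permutations)
  also have "\<dots> = (\<Sum>p\<in>P. of_int (sign p) * (F * G p / C))"
  proof (rule sum.cong)
    fix p assume "p \<in> P"
    hence p: "p permutes {1..n}" by (simp add: P_def)
    have pi: "p i \<in> {1..n}" if "i \<in> {1..n}" for i using permutes_in_image[OF p] that by simp
    have each: "ffact_c (?v (p i)) (m i) * ffact_c x (n - p i) = ffact_c x (m i) * ffact_c (x - of_nat (m i)) (n - p i)"
      if i: "i \<in> {1..n}" for i
    proof -
      have eqv: "?v (p i) = x - of_nat (n - p i)" using pi[OF i] by (simp add: of_nat_diff)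
      have "ffact_c (?v (p i)) (m i) * ffact_c x (n - p i) = ffact_c x (n - p i + m i)"
        unfolding eqv ffact_add by (simp add: mult.commute)
      also have "\<dots> = ffact_c x (m i + (n - p i))" by (simp add: add.commute)
      also have "\<dots> = ffact_c x (m i) * ffact_c (x - of_nat (m i)) (n - p i)" by (rule ffact_add)
      finally show ?thesis .
    qed
    have "(\<Prod>i\<in>{1..n}. ffact_c x (n - p i)) = (\<Prod>j\<in>{1..n}. ffact_c x (n - j))"
      by (rule prod.reindex_bij_betw[OF permutes_imp_bij[OF p], where g="\<lambda>j. ffact_c x (n - j)"])
    also have "\<dots> = C" unfolding C_def
      by (rule prod.reindex_bij_witness[of _ "\<lambda>i. Suc n - i" "\<lambda>i. Suc n - i"]) auto
    finally have Cp: "(\<Prod>i\<in>{1..n}. ffact_c x (n - p i)) = C" .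
    have "(\<Prod>i=1..n. ffact_c (?v (p i)) (m i)) * C
        = (\<Prod>i=1..n. ffact_c (?v (p i)) (m i) * ffact_c x (n - p i))"
      unfolding Cp[symmetric] by (rule prod.distrib[symmetric])
    also have "\<dots> = (\<Prod>i=1..n. ffact_c x (m i) * ffact_c (x - of_nat (m i)) (n - p i))"
      by (rule prod.cong) (simp_all add: each)
    also have "\<dots> = F * G p" by (simp add: prod.distrib F_def G_def)
    finally have "(\<Prod>i=1..n. ffact_c (?v (p i)) (m i)) * C = F * G p" .
    hence X: "(\<Prod>i=1..n. ffact_c (?v (p i)) (m i)) = F * G p / C" using C0 by (simp add: field_simps)
    show "of_int (sign p) * Mon (E p) ?v = of_int (sign p) * (F * G p / C)"
      unfolding E_def Mon_E[OF p] X by (rule refl)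
  qed simp
  also have "\<dots> = F / C * (\<Sum>p\<in>P. of_int (sign p) * G p)"
    unfolding sum_distrib_left by (intro sum.cong refl) (simp add: divide_inverse mult_ac)
  also have "(\<Sum>p\<in>P. of_int (sign p) * G p) = detn n (\<lambda>i j. ffact_c (x - of_nat (m i)) (n - j))"
    by (simp add: detn_def P_def G_def)
  also have "\<dots> = det (mat n n (\<lambda>(i,j). ffact_c (x - of_nat (m (Suc i))) (n - Suc j)))"
    by (simp add: detn_det)
  also have "\<dots> = (\<Prod>i<n. \<Prod>j\<in>{i<..<n}. ((x - of_nat (m (Suc i))) - (x - of_nat (m (Suc j)))))"
    by (rule ffvand)
  also have "\<dots> = (\<Prod>i<n. \<Prod>j\<in>{i<..<n}. (of_nat (m (Suc j)) - of_nat (m (Suc i)) :: complex))"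
    by simp
  also have "\<dots> = of_int (\<Prod>i=1..n. \<Prod>j\<in>{i<..n}. (int (m j) - int (m i)))"
  proof -
    have "of_int (\<Prod>i=1..n. \<Prod>j\<in>{i<..n}. (int (m j) - int (m i)))
       = (\<Prod>i=1..n. \<Prod>j\<in>{i<..n}. (of_nat (m j) - of_nat (m i) :: complex))"
      by simp
    also have "\<dots> = (\<Prod>i\<in>{0..<n}. \<Prod>j\<in>{Suc i<..n}. (of_nat (m j) - of_nat (m (Suc i)) :: complex))"
      using prod.reindex_bij_betw[OF bij_Suc, of "\<lambda>i. \<Prod>j\<in>{i<..n}. (of_nat (m j) - of_nat (m i) :: complex)"]
      by simp
    also have "\<dots> = (\<Prod>i<n. \<Prod>j\<in>{i<..<n}. (of_nat (m (Suc j)) - of_nat (m (Suc i)) :: complex))"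
    proof (rule prod.cong)
      show "{0..<n} = {..<n}" by auto
    next
      fix i
      show "(\<Prod>j\<in>{Suc i<..n}. (of_nat (m j) - of_nat (m (Suc i)) :: complex)) =
          (\<Prod>j\<in>{i<..<n}. (of_nat (m (Suc j)) - of_nat (m (Suc i))))"
        using prod.reindex_bij_betw[OF bij_Suc2, of "\<lambda>j. (of_nat (m j) - of_nat (m (Suc i)) :: complex)" i n]
        by simp
    qed
    finally show ?thesis by simp
  qed
  finally have L: "star_eval (detn n (\<lambda>i j. mvar j ^ m i)) ?v =
      F / C * of_int (\<Prod>i=1..n. \<Prod>j\<in>{i<..n}. (int (m j) - int (m i)))" .
  have R: "(\<Prod>i=1..n. ffact_c x (m i) / ffact_c x (i - 1)) = F / C"
    by (simp add: F_def C_def prod_dividef)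
  show ?thesis unfolding R L by (simp add: mult.commute)
qed

end
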